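(* For real $s>1$ let $u_s(t):=t\big(\frac{s+t}{s-1}\big)^{s-1}$. For each $s>1$ the equation $u_s(t)=1$ has a unique solution $t=c(s)$ with $t\ge-1$; it is a simple solution and $c(s)\in(0,1)$. The function $c$ is $C^\infty$ on $(1,\infty)$, strictly decreasing, and $c(s)\to c_0$ as $s\to\infty$, where $c_0\approx0.278465$ is the unique real number with $c_0e^{c_0+1}=1$, $0<c_0<1$. In particular, for every even integer $s\ge2$, the negative real root of $\psi_s(z):=z^{s-1}(z+s)-(s-1)^{s-1}$ is $z=-s-c(s)$. *)

theory Defs
  imports "HOL-Analysis.Analysis"
begin

definition u :: "real \<Rightarrow> real \<Rightarrow> real" where
  "u s t = t * ((s + t) / (s - 1)) powr (s - 1)"

text \<open>c(s): the solution t \<ge> -1 of u_s(t) = 1 (uniqueness is part of the theorem).\<close>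
definition c :: "real \<Rightarrow> real" where
  "c s = (THE t. t \<ge> -1 \<and> u s t = 1)"

definition c0 :: real where
  "c0 = (THE x. 0 < x \<and> x < 1 \<and> x * exp (x + 1) = 1)"

definition smooth_on :: "real set \<Rightarrow> (real \<Rightarrow> real) \<Rightarrow> bool" where
  "smooth_on S f \<longleftrightarrow> (\<exists>D :: nat \<Rightarrow> real \<Rightarrow> real.
      (\<forall>x\<in>S. D 0 x = f x) \<and>
      (\<forall>n. \<forall>x\<in>S. (D n has_real_derivative D (Suc n) x) (at x)))"

definition psi :: "nat \<Rightarrow> real \<Rightarrow> real" where
  "psi s z = z ^ (s - 1) * (z + real s) - (real s - 1) ^ (s - 1)"

end

theory Submission
  imports Defs
begin


lemma u_nonpos: assumes "s > 1" "t \<ge> -1" "t \<le> 0" shows "u s t \<le> 0"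
  using assms unfolding u_def by (simp add: mult_nonpos_nonneg)

lemma u_strict_mono: assumes "s > 1" "0 < t1" "t1 < t2" shows "u s t1 < u s t2"
proof -
  have b: "0 < (s + t1) / (s - 1)" using assms by auto
  have le: "(s + t1) / (s - 1) \<le> (s + t2) / (s - 1)" using assms by (simp add: divide_right_mono)
  have p: "((s + t1) / (s - 1)) powr (s - 1) \<le> ((s + t2) / (s - 1)) powr (s - 1)"
    using b le assms by (intro powr_mono2) auto
  have pp: "0 < ((s + t1) / (s - 1)) powr (s - 1)" using b by (simp only: powr_gt_zero)
  have "t1 * ((s + t1) / (s - 1)) powr (s - 1) < t2 * ((s + t1) / (s - 1)) powr (s - 1)"
    using pp assms by simp
  also have "\<dots> \<le> t2 * ((s + t2) / (s - 1)) powr (s - 1)"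
    using p assms by (intro mult_left_mono) auto
  finally show ?thesis unfolding u_def .
qed

lemma u_cont: assumes "s > 1" shows "continuous_on {0..1} (u s)"
  unfolding u_def using assms
  by (intro continuous_intros) (auto simp: field_simps)

lemma u_one: assumes "s > 1" shows "u s 1 > 1"
proof -
  have "1 < (s + 1) / (s - 1)" using assms by (simp add: field_simps)
  then show ?thesis unfolding u_def using assms gr_one_powr by simp
qed

lemma ex1_u: assumes "s > 1" shows "\<exists>!t. t \<ge> -1 \<and> u s t = 1"
proof -
  have u0: "u s 0 = 0" by (simp add: u_def)
  obtain t where t: "0 \<le> t" "t \<le> 1" "u s t = 1"
    using IVT'[of "u s" 0 1 1] u0 u_one[OF assms] u_cont[OF assms] by auto
  have tp: "t > 0" using t u0 by (cases "t = 0") auto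
  show ?thesis
  proof (rule ex1I[of _ t])
    show "t \<ge> -1 \<and> u s t = 1" using t by auto
  next
    fix y assume y: "y \<ge> -1 \<and> u s y = 1"
    have yp: "y > 0"
    proof (rule ccontr)
      assume "\<not> y > 0"
      then have "u s y \<le> 0" using u_nonpos[OF assms, of y] y by linarith
      then show False using y by linarith
    qed
    show "y = t"
    proof (rule ccontr)
      assume "y \<noteq> t"
      then have "y < t \<or> t < y" by linarith
      then show False
        using u_strict_mono[OF assms yp, of t] u_strict_mono[OF assms tp, of y] t y by auto
    qed
  qed
qed

lemma c_spec: assumes "s > 1" shows "c s \<ge> -1 \<and> u s (c s) = 1"
  unfolding c_def using theI'[OF ex1_u[OF assms]] .

lemma c_pos: assumes "s > 1" shows "0 < c s"
proof (rule ccontr)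
  assume "\<not> 0 < c s"
  then have "u s (c s) \<le> 0" using u_nonpos[OF assms, of "c s"] c_spec[OF assms] by linarith
  then show False using c_spec[OF assms] by linarith
qed

lemma c_u: assumes "s > 1" shows "u s (c s) = 1"
  using c_spec[OF assms] by blast

lemma c_lt1: assumes "s > 1" shows "c s < 1"
proof (rule ccontr)
  assume a: "\<not> c s < 1"
  have "u s 1 \<le> u s (c s)"
  proof (cases "c s = 1")
    case False
    then have "1 < c s" using a by linarith
    then show ?thesis using u_strict_mono[OF assms, of 1 "c s"] by simp
  qed simp
  then show False using u_one[OF assms] c_u[OF assms] by linarith
qed

lemma c_unique: assumes "s > 1" "t \<ge> -1" "u s t = 1" shows "t = c s"
  using ex1_u[OF assms(1)] c_spec[OF assms(1)] assms by blast



definition F :: "real \<Rightarrow> real \<Rightarrow> real" where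
  "F s t = ln t + (s - 1) * (ln (s + t) - ln (s - 1))"

definition Fs :: "real \<Rightarrow> real \<Rightarrow> real" where
  "Fs s t = ln (s + t) - ln (s - 1) + (s - 1) / (s + t) - 1"

definition Ft :: "real \<Rightarrow> real \<Rightarrow> real" where
  "Ft s t = 1 / t + (s - 1) / (s + t)"

lemma u_F: assumes "s > 1" "t > 0" shows "u s t = exp (F s t)"
proof -
  have "u s t = exp (ln (u s t))" using assms by (simp add: u_def)
  also have "ln (u s t) = F s t" using assms
    by (simp add: u_def F_def ln_mult ln_powr ln_div)
  finally show ?thesis .
qed

lemma F_c: assumes "s > 1" shows "F s (c s) = 0"
  using u_F[OF assms c_pos[OF assms]] c_u[OF assms] by simp

lemma F_mono: assumes "s > 1" "0 < t1" "t1 < t2" shows "F s t1 < F s t2"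
proof -
  have "ln t1 < ln t2" using assms by simp
  moreover have "ln (s + t1) < ln (s + t2)" using assms by simp
  ultimately show ?thesis unfolding F_def using assms by (simp add: mult_strict_left_mono add_strict_mono)
qed

lemma F_inj: assumes "s > 1" "0 < t1" "0 < t2" "F s t1 = F s t2" shows "t1 = t2"
  using F_mono[OF assms(1,2), of t2] F_mono[OF assms(1,3), of t1] assms
  by (cases t1 t2 rule: linorder_cases) auto

definition tau :: "real \<Rightarrow> real \<Rightarrow> real" where
  "tau s y = (THE t. t > 0 \<and> F s t = y)"

lemma tau_F: assumes "s > 1" "t > 0" shows "tau s (F s t) = t"
  unfolding tau_def
  by (rule the_equality) (use assms F_inj in auto)

lemma c_tau: assumes "s > 1" shows "c s = tau s 0"
  using tau_F[OF assms c_pos[OF assms]] F_c[OF assms] by simp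

lemma Ft_pos: assumes "s > 1" "t > 0" shows "Ft s t > 0"
  using assms unfolding Ft_def by (auto intro!: add_pos_pos)

lemma hd_fst: "(fst has_derivative fst) FF"
  by (rule bounded_linear_imp_has_derivative[OF bounded_linear_fst])
lemma hd_snd: "(snd has_derivative snd) FF"
  by (rule bounded_linear_imp_has_derivative[OF bounded_linear_snd])

lemma Phi_deriv: assumes "s > 1" "t > 0"
  shows "((\<lambda>x. (fst x, F (fst x) (snd x))) has_derivative
     (\<lambda>h. (fst h, Fs s t * fst h + Ft s t * snd h))) (at (s, t))"
proof -
  have e: "(s - 1) * ((a + b) * inverse (s + t) - a * inverse (s - 1)) = (s-1)/(s+t)*a + (s-1)/(s+t)*b - a" for a b
  proof -
    have gen: "m * ((a + b) * inverse q - a * inverse m) = m/q*a + m/q*b - a"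
      if "m \<noteq> 0" "q \<noteq> 0" for m q :: real using that by (simp add: field_simps)
    have "s - 1 \<noteq> 0" "s + t \<noteq> 0" using assms by auto
    then show ?thesis using gen by blast
  qed
  have d2: "((\<lambda>x. F (fst x) (snd x)) has_derivative (\<lambda>h. Fs s t * fst h + Ft s t * snd h)) (at (s, t))"
    unfolding F_def
    using assms apply (auto intro!: derivative_eq_intros hd_fst hd_snd simp: fun_eq_iff)
    apply (subst e)
    apply (simp add: Fs_def Ft_def algebra_simps divide_inverse)
    done
  have d1: "((\<lambda>x. fst x) has_derivative (\<lambda>h. fst h)) (at (s, t))"
    by (rule hd_fst)
  show ?thesis using has_derivative_Pair[OF d1 d2] .
qed

lemma c_deriv: assumes s1: "s > 1"
  shows "(c has_real_derivative (- Fs s (c s) / Ft s (c s))) (at s)"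
proof -
  define S where "S = {x::real\<times>real. 1 < fst x} \<inter> {x. 0 < snd x}"
  define \<Phi> where "\<Phi> = (\<lambda>x::real\<times>real. (fst x, F (fst x) (snd x)))"
  define g where "g = (\<lambda>y::real\<times>real. (fst y, tau (fst y) (snd y)))"
  define A where "A = Fs s (c s)"
  define B where "B = Ft s (c s)"
  define \<Phi>' where "\<Phi>' = (\<lambda>h::real\<times>real. (fst h, A * fst h + B * snd h))"
  define g' where "g' = (\<lambda>k::real\<times>real. (fst k, (snd k - A * fst k) / B))"
  have cp: "c s > 0" using c_pos[OF s1] .
  have Bp: "B > 0" unfolding B_def using Ft_pos[OF s1 cp] .
  have oS: "open S" unfolding S_def
    by (intro open_Int open_Collect_less continuous_intros)
  have inS: "(s, c s) \<in> S" using s1 cp by (simp add: S_def)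
  have contS: "continuous_on S \<Phi>"
  proof -
    have "\<forall>x\<in>S. isCont \<Phi> x"
    proof
      fix x assume "x \<in> S"
      then obtain a b where x: "x = (a, b)" "a > 1" "b > 0" unfolding S_def by (cases x) auto
      show "isCont \<Phi> x" unfolding \<Phi>_def x(1)
        using has_derivative_continuous[OF Phi_deriv[OF x(2,3)]] .
    qed
    then show ?thesis using continuous_at_imp_continuous_on by blast
  qed
  have gf: "g (\<Phi> x) = x" if "x \<in> S" for x
  proof -
    obtain a b where x: "x = (a, b)" "a > 1" "b > 0" using \<open>x \<in> S\<close> unfolding S_def by (cases x) auto
    show ?thesis unfolding x(1) g_def \<Phi>_def using tau_F[OF x(2,3)] by simp
  qed
  have dP: "(\<Phi> has_derivative \<Phi>') (at (s, c s))"
    unfolding \<Phi>_def \<Phi>'_def A_def B_def using Phi_deriv[OF s1 cp] .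
  have id: "\<Phi>' \<circ> g' = id"
    using Bp by (auto simp: fun_eq_iff \<Phi>'_def g'_def field_simps)
  have dg: "(g has_derivative g') (at (\<Phi> (s, c s)))"
    by (rule has_derivative_inverse_strong[OF oS inS contS gf dP id])
  have Pc: "\<Phi> (s, c s) = (s, 0)" unfolding \<Phi>_def using F_c[OF s1] by simp
  have d1: "((\<lambda>x::real. (x, 0::real)) has_derivative (\<lambda>h. (h, 0))) (at s)"
    by (intro derivative_eq_intros) auto
  have d2: "((\<lambda>x. g (x, 0)) has_derivative (\<lambda>h. g' (h, 0))) (at s)"
    using has_derivative_compose[OF d1, of g g'] dg Pc by simp
  have d3: "((\<lambda>x. snd (g (x, 0))) has_derivative (\<lambda>h. snd (g' (h, 0)))) (at s)"
    using has_derivative_snd[OF d2] .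
  have d4: "((\<lambda>x. tau x 0) has_derivative (\<lambda>h. snd (g' (h, 0)))) (at s)"
    using d3 unfolding g_def by simp
  have d5: "(c has_derivative (\<lambda>h. snd (g' (h, 0)))) (at s)"
    by (rule has_derivative_transform_within_open[OF d4, of "{1<..}"]) (use s1 c_tau in auto)
  show ?thesis unfolding has_field_derivative_def
    by (rule has_derivative_eq_rhs[OF d5]) (auto simp: fun_eq_iff g'_def A_def B_def)
qed



datatype ex = Cn real | Sv | Tv | Ad ex ex | Mu ex ex | Iv ex | Lg ex

fun ev :: "ex \<Rightarrow> real \<Rightarrow> real \<Rightarrow> real" where
  "ev (Cn a) s t = a"
| "ev Sv s t = s"
| "ev Tv s t = t"
| "ev (Ad a b) s t = ev a s t + ev b s t"
| "ev (Mu a b) s t = ev a s t * ev b s t"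
| "ev (Iv a) s t = inverse (ev a s t)"
| "ev (Lg a) s t = ln (ev a s t)"

fun ok :: "ex \<Rightarrow> real \<Rightarrow> real \<Rightarrow> bool" where
  "ok (Cn a) s t = True"
| "ok Sv s t = True"
| "ok Tv s t = True"
| "ok (Ad a b) s t = (ok a s t \<and> ok b s t)"
| "ok (Mu a b) s t = (ok a s t \<and> ok b s t)"
| "ok (Iv a) s t = (ok a s t \<and> ev a s t \<noteq> 0)"
| "ok (Lg a) s t = (ok a s t \<and> ev a s t > 0)"

fun dx :: "ex \<Rightarrow> ex \<Rightarrow> ex" where
  "dx g (Cn a) = Cn 0"
| "dx g Sv = Cn 1"
| "dx g Tv = g"
| "dx g (Ad a b) = Ad (dx g a) (dx g b)"
| "dx g (Mu a b) = Ad (Mu (dx g a) b) (Mu a (dx g b))"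
| "dx g (Iv a) = Mu (Cn (-1)) (Mu (dx g a) (Mu (Iv a) (Iv a)))"
| "dx g (Lg a) = Mu (dx g a) (Iv a)"

lemma dx_ok: assumes "ok g s t" shows "ok e s t \<Longrightarrow> ok (dx g e) s t"
  using assms by (induction e) auto

lemma dx_deriv:
  assumes f: "(f has_real_derivative ev g s (f s)) (at s)"
  shows "ok e s (f s) \<Longrightarrow> ((\<lambda>x. ev e x (f x)) has_real_derivative ev (dx g e) s (f s)) (at s)"
proof (induction e)
  case (Cn a) then show ?case by simp
next
  case Sv then show ?case by simp
next
  case Tv then show ?case using f by simp
next
  case (Ad a b) then show ?case by (auto intro!: derivative_eq_intros)
next
  case (Mu a b) then show ?case by (auto intro!: derivative_eq_intros)
next
  case (Iv a)
  then have d: "((\<lambda>x. ev a x (f x)) has_real_derivative ev (dx g a) s (f s)) (at s)" and nz: "ev a s (f s) \<noteq> 0" by auto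
  show ?case using DERIV_inverse'[OF d nz] by (simp add: mult_ac)
next
  case (Lg a)
  then have d: "((\<lambda>x. ev a x (f x)) has_real_derivative ev (dx g a) s (f s)) (at s)" and p: "ev a s (f s) > 0" by auto
  show ?case using DERIV_chain2[OF DERIV_ln[OF p] d] by (simp add: mult_ac)
qed

definition Ae :: ex where
  "Ae = Ad (Ad (Lg (Ad Sv Tv)) (Mu (Cn (-1)) (Lg (Ad Sv (Cn (-1))))))
           (Ad (Mu (Ad Sv (Cn (-1))) (Iv (Ad Sv Tv))) (Cn (-1)))"
definition Be :: ex where
  "Be = Ad (Iv Tv) (Mu (Ad Sv (Cn (-1))) (Iv (Ad Sv Tv)))"
definition Ge :: ex where
  "Ge = Mu (Cn (-1)) (Mu Ae (Iv Be))"

lemma ev_Ae: "ev Ae s t = Fs s t"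
  by (simp add: Ae_def Fs_def divide_inverse)
lemma ev_Be: "ev Be s t = Ft s t"
  by (simp add: Be_def Ft_def divide_inverse)
lemma ev_Ge: "ev Ge s t = - Fs s t / Ft s t"
  by (simp add: Ge_def ev_Ae ev_Be divide_inverse)

lemma ok_Ge: assumes "s > 1" "t > 0" shows "ok Ge s t"
  using assms Ft_pos[OF assms] by (simp add: Ge_def Ae_def Be_def Ft_def divide_inverse)

lemma c_smooth: "smooth_on {1<..} c"
proof -
  define D where "D = (\<lambda>n x. ev ((dx Ge ^^ n) Tv) x (c x))"
  have okn: "ok ((dx Ge ^^ n) Tv) x (c x)" if "x > 1" for n x
    using that by (induction n) (auto intro!: dx_ok ok_Ge c_pos)
  have dc: "(c has_real_derivative ev Ge x (c x)) (at x)" if "x > 1" for x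
    using c_deriv[OF that] by (simp add: ev_Ge)
  show ?thesis unfolding smooth_on_def
  proof (intro exI[of _ D] conjI ballI allI)
    fix x :: real assume "x \<in> {1<..}" then show "D 0 x = c x" by (simp add: D_def)
  next
    fix n and x :: real assume "x \<in> {1<..}"
    then have x: "x > 1" by simp
    show "(D n has_real_derivative D (Suc n) x) (at x)"
      unfolding D_def using dx_deriv[OF dc[OF x] okn[OF x]] by simp
  qed
qed

lemma ln_strict: assumes "(x::real) > 0" "x \<noteq> 1" shows "ln x < x - 1"
  using ln_le_minus_one[OF assms(1)] ln_eq_minus_one[OF assms(1)] assms(2) by fastforce

lemma Fs_pos: assumes "s > 1" "t > 0" shows "Fs s t > 0"
proof -
  define q where "q = (s + t) / (s - 1)"
  have q1: "q > 1" using assms by (simp add: q_def field_simps)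
  have l: "ln (s + t) - ln (s - 1) = ln q" using assms by (simp add: q_def ln_div)
  have r: "(s - 1) / (s + t) = 1 / q" using assms by (simp add: q_def)
  have "ln (1 / q) < 1 / q - 1" using q1 by (intro ln_strict) auto
  then have "ln q + 1 / q - 1 > 0" using q1 by (simp add: ln_div)
  then show ?thesis unfolding Fs_def l r by simp
qed

lemma c_decr: assumes "1 < a" "a < b" shows "c b < c a"
proof (rule DERIV_neg_imp_decreasing[OF assms(2)])
  fix x assume "a \<le> x" "x \<le> b"
  then have x: "x > 1" using assms by simp
  show "\<exists>y. (c has_real_derivative y) (at x) \<and> y < 0"
    using c_deriv[OF x] Fs_pos[OF x c_pos[OF x]] Ft_pos[OF x c_pos[OF x]]
    by (intro exI[of _ "- Fs x (c x) / Ft x (c x)"]) (simp add: divide_pos_pos)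
qed



lemma h_mono: fixes x y :: real assumes "0 < x" "x < y" shows "x * exp (x + 1) < y * exp (y + 1)"
proof -
  have "exp (x + 1) < exp (y + 1)" using assms by simp
  then show ?thesis using assms by (intro mult_strict_mono) auto
qed

lemma c0_ex1: "\<exists>!x::real. 0 < x \<and> x < 1 \<and> x * exp (x + 1) = 1"
proof -
  have cont: "continuous_on {0..1} (\<lambda>x::real. x * exp (x + 1))"
    by (intro continuous_intros)
  have e2: "1 < exp (2::real)" by simp
  obtain x :: real where x: "0 \<le> x" "x \<le> 1" "x * exp (x + 1) = 1"
    using IVT'[of "\<lambda>x::real. x * exp (x + 1)" 0 1 1] cont e2 by auto
  have x0: "x \<noteq> 0" using x by auto
  have x1: "x \<noteq> 1" using x e2 by auto
  show ?thesis
  proof (rule ex1I[of _ x])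
    show "0 < x \<and> x < 1 \<and> x * exp (x + 1) = 1" using x x0 x1 by auto
  next
    fix y :: real assume y: "0 < y \<and> y < 1 \<and> y * exp (y + 1) = 1"
    show "y = x"
    proof (rule ccontr)
      assume "y \<noteq> x"
      then have "y < x \<or> x < y" by linarith
      then show False using h_mono[of y x] h_mono[of x y] x y x0 by auto
    qed
  qed
qed

lemma c0_spec: "0 < c0" "c0 < 1" "ln c0 + c0 + 1 = 0"
proof -
  have h: "0 < c0 \<and> c0 < 1 \<and> c0 * exp (c0 + 1) = 1"
    unfolding c0_def by (rule theI'[OF c0_ex1])
  then show "0 < c0" "c0 < 1" by auto
  have "ln (c0 * exp (c0 + 1)) = 0" using h by simp
  moreover have "ln (c0 * exp (c0 + 1)) = ln c0 + (c0 + 1)"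
    using h ln_mult[of c0 "exp (c0 + 1)"] by simp
  ultimately show "ln c0 + c0 + 1 = 0" by simp
qed

lemma c_bounds: assumes s: "s > 1" shows "c0 \<le> c s" "c s \<le> c0 + 4 / (s - 1)"
proof -
  define t where "t = c s"
  define m where "m = s - 1"
  define a where "a = 1 + t"
  have t0: "0 < t" "t < 1" using c_pos[OF s] c_lt1[OF s] by (auto simp: t_def)
  have m0: "m > 0" using s by (simp add: m_def)
  have a0: "1 < a" "a < 2" using t0 by (auto simp: a_def)
  have F0: "ln t + m * (ln (s + t) - ln (s - 1)) = 0"
    using F_c[OF s] by (simp add: F_def t_def m_def)
  have lq: "ln (s + t) - ln (s - 1) = ln (a / m + 1)"
  proof -
    have "ln (s + t) - ln (s - 1) = ln ((s + t) / (s - 1))" using s t0 by (simp add: ln_div)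
    also have "(s + t) / (s - 1) = a / m + 1" using m0 by (simp add: a_def m_def field_simps)
    finally show ?thesis .
  qed
  have am: "a / m > 0" using m0 a0 by simp
  have up: "ln (a / m + 1) \<le> a / m"
    using ln_le_minus_one[of "a / m + 1"] am by simp
  have lo: "ln (a / m + 1) \<ge> (a / m) / (1 + a / m)"
    using ln_add1_ge[of "a / m"] m0 a0 by simp
  define H where "H = ln t + t + 1"
  have HF: "H = a - m * ln (a / m + 1)" using F0 lq by (simp add: H_def a_def)
  have "m * ln (a / m + 1) \<le> m * (a / m)" using up m0 by (intro mult_left_mono) auto
  then have H0: "H \<ge> 0" using HF m0 by simp
  have "m * ((a / m) / (1 + a / m)) = a * m / (m + a)" using m0 a0 by (simp add: field_simps)
  moreover have "m * ln (a / m + 1) \<ge> m * ((a / m) / (1 + a / m))"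
    using lo m0 by (intro mult_left_mono) auto
  ultimately have "H \<le> a - a * m / (m + a)" using HF by simp
  also have "a - a * m / (m + a) = a * a / (m + a)" using m0 a0 by (simp add: field_simps)
  also have "\<dots> \<le> 4 / m"
  proof -
    have "a * a \<le> 2 * 2" using a0 by (intro mult_mono) auto
    then have "a * a / (m + a) \<le> 4 / (m + a)" using m0 a0 by (intro divide_right_mono) auto
    also have "\<dots> \<le> 4 / m" using m0 a0 by (intro divide_left_mono) auto
    finally show ?thesis .
  qed
  finally have Hub: "H \<le> 4 / m" .
  show ge: "c0 \<le> c s"
  proof (rule ccontr)
    assume "\<not> c0 \<le> c s"
    then have "t < c0" by (simp add: t_def)
    then have "ln t < ln c0" using t0 by simp
    then have "H < ln c0 + c0 + 1" using \<open>t < c0\<close> by (simp add: H_def)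
    then show False using c0_spec H0 by linarith
  qed
  have "t - c0 \<le> H"
  proof -
    have "ln c0 \<le> ln t" using ge c0_spec by (simp add: t_def)
    then show ?thesis using c0_spec(3) by (simp add: H_def)
  qed
  then show "c s \<le> c0 + 4 / (s - 1)" using Hub by (simp add: t_def m_def)
qed

lemma c_lim: "(c \<longlongrightarrow> c0) at_top"
proof (rule tendsto_sandwich[of "\<lambda>_. c0" c _ "\<lambda>s. c0 + 4 / (s - 1)"])
  show "\<forall>\<^sub>F s in at_top. c0 \<le> c s"
    using eventually_gt_at_top[of 1] by eventually_elim (rule c_bounds)
  show "\<forall>\<^sub>F s in at_top. c s \<le> c0 + 4 / (s - 1)"
    using eventually_gt_at_top[of 1] by eventually_elim (rule c_bounds)
  have f1: "filterlim (\<lambda>s::real. -1 + s) at_top at_top"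
    by (rule filterlim_tendsto_add_at_top[OF tendsto_const filterlim_ident])
  have f2: "filterlim (\<lambda>s::real. s - 1) at_top at_top"
    using f1 by (simp add: add.commute)
  have "((\<lambda>s::real. 4 / (s - 1)) \<longlongrightarrow> 0) at_top"
    by (rule tendsto_divide_0[OF tendsto_const filterlim_at_top_imp_at_infinity[OF f2]])
  then have "((\<lambda>s. c0 + 4 / (s - 1)) \<longlongrightarrow> c0 + 0) at_top"
    by (intro tendsto_add tendsto_const)
  then show "((\<lambda>s. c0 + 4 / (s - 1)) \<longlongrightarrow> c0) at_top" by simp
qed simp



lemma u_nat: assumes n: "n \<ge> 2" and t: "t > 0"
  shows "u (real n) t = t * (real n + t) ^ (n - 1) / (real n - 1) ^ (n - 1)"
proof -
  have e: "real n - 1 = real (n - 1)" using n by (simp add: of_nat_diff)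
  have p: "0 < (real n + t) / (real n - 1)" using n t by auto
  have "u (real n) t = t * ((real n + t) / (real n - 1)) ^ (n - 1)"
    unfolding u_def e using powr_realpow[OF p[unfolded e]] by simp
  then show ?thesis by (simp add: power_divide)
qed

lemma psi_shift: assumes "odd (n - 1)"
  shows "psi n (- real n - t) = t * (real n + t) ^ (n - 1) - (real n - 1) ^ (n - 1)"
proof -
  have "(- real n - t) ^ (n - 1) = - ((real n + t) ^ (n - 1))"
    using assms power_minus_odd[of "n - 1" "real n + t"] by simp
  then show ?thesis unfolding psi_def by simp
qed

lemma psi_roots: fixes n :: nat assumes ev: "even n" and n2: "n \<ge> 2"
  shows "{z::real. z < 0 \<and> psi n z = 0} = {- real n - c (real n)}"
proof -
  define s where "s = real n"
  have s1: "s > 1" using n2 by (simp add: s_def)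
  have od: "odd (n - 1)" using ev n2 by simp
  have pk: "(real n - 1) ^ (n - 1) > 0" using n2 by simp
  have key: "psi n (- s - t) = 0 \<longleftrightarrow> u s t = 1" if t: "t > 0" for t
  proof -
    have "psi n (- s - t) = 0 \<longleftrightarrow> t * (real n + t) ^ (n - 1) = (real n - 1) ^ (n - 1)"
      using psi_shift[OF od, of t] by (simp add: s_def)
    also have "\<dots> \<longleftrightarrow> u s t = 1"
      using u_nat[OF n2 t] pk by (auto simp: s_def)
    finally show ?thesis .
  qed
  show ?thesis
  proof (rule set_eqI, rule iffI)
    fix z :: real assume "z \<in> {z. z < 0 \<and> psi n z = 0}"
    then have z0: "z < 0" and pz: "psi n z = 0" by auto
    have zs: "z < - s"
    proof (rule ccontr)
      assume "\<not> z < - s"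
      then have a: "z + real n \<ge> 0" by (simp add: s_def)
      have neg: "z ^ (n - 1) < 0" using z0 od by (simp add: odd_pos power_less_zero_eq)
      have "z ^ (n - 1) * (z + real n) \<le> 0" using neg a by (intro mult_nonpos_nonneg) linarith+
      then have "psi n z < 0" using pk unfolding psi_def by simp
      then show False using pz by simp
    qed
    define t where "t = - s - z"
    have tp: "t > 0" using zs by (simp add: t_def)
    have zt: "z = - s - t" by (simp add: t_def)
    have "u s t = 1" using key[OF tp] pz zt by simp
    then have "t = c s" using c_unique[OF s1, of t] tp by simp
    then show "z \<in> {- real n - c (real n)}" using zt by (simp add: s_def)
  next
    fix z :: real assume "z \<in> {- real n - c (real n)}"
    then have z: "z = - s - c s" by (simp add: s_def)
    have cp: "c s > 0" using c_pos[OF s1] .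
    have "psi n z = 0" using key[OF cp] c_u[OF s1] z by simp
    moreover have "z < 0" using z cp s1 by simp
    ultimately show "z \<in> {z. z < 0 \<and> psi n z = 0}" by simp
  qed
qed


lemma u_deriv: assumes s: "s > 1" and t: "t > 0"
  shows "\<exists>D. (u s has_real_derivative D) (at t) \<and> D \<noteq> 0"
proof -
  define b where "b = (s + t) / (s - 1)"
  have bp: "b > 0" using s t by (simp add: b_def)
  have d_in: "((\<lambda>x. (s + x) / (s - 1)) has_real_derivative 1 / (s - 1)) (at t)"
    using s by (auto intro!: derivative_eq_intros)
  have dp: "((\<lambda>x. ((s + x) / (s - 1)) powr (s - 1)) has_real_derivative
      ((s - 1) * b powr (s - 1 - 1)) * (1 / (s - 1))) (at t)"
    unfolding b_def using DERIV_chain2[OF has_real_derivative_powr[OF bp[unfolded b_def], of "s - 1"] d_in] .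
  have dm: "((\<lambda>x. x * ((s + x) / (s - 1)) powr (s - 1)) has_real_derivative
      t * (((s - 1) * b powr (s - 1 - 1)) * (1 / (s - 1))) + 1 * ((s + t) / (s - 1)) powr (s - 1)) (at t)"
    by (rule DERIV_mult'[OF DERIV_ident dp])
  have ue: "u s = (\<lambda>x. x * ((s + x) / (s - 1)) powr (s - 1))"
    by (rule ext) (simp add: u_def)
  have pos1: "t * (((s - 1) * b powr (s - 1 - 1)) * (1 / (s - 1))) > 0"
    using s t bp by (intro mult_pos_pos) auto
  have pos2: "((s + t) / (s - 1)) powr (s - 1) > 0"
    using bp s t unfolding b_def by (simp only: powr_gt_zero)
  define D where "D = t * (((s - 1) * b powr (s - 1 - 1)) * (1 / (s - 1))) + 1 * ((s + t) / (s - 1)) powr (s - 1)"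
  have Dp: "D > 0" unfolding D_def using pos1 pos2 by linarith
  have "(u s has_real_derivative D) (at t)" unfolding ue D_def by (rule dm)
  then show ?thesis using Dp by auto
qed

theorem mainTheorem14:
  shows "(\<forall>s::real. s > 1 \<longrightarrow>
            (\<exists>!t. t \<ge> -1 \<and> u s t = 1) \<and>
            (\<exists>D. (u s has_real_derivative D) (at (c s)) \<and> D \<noteq> 0) \<and>
            0 < c s \<and> c s < 1)
       \<and> smooth_on {1<..} c
       \<and> (\<forall>a b::real. 1 < a \<longrightarrow> a < b \<longrightarrow> c b < c a)
       \<and> (\<exists>!x::real. 0 < x \<and> x < 1 \<and> x * exp (x + 1) = 1)
       \<and> (c \<longlongrightarrow> c0) at_top
       \<and> (\<forall>s::nat. even s \<and> s \<ge> 2 \<longrightarrow>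
            {z::real. z < 0 \<and> psi s z = 0} = {- real s - c (real s)})"
proof (intro conjI allI impI)
  fix s :: real assume s: "s > 1"
  show "\<exists>!t. t \<ge> -1 \<and> u s t = 1" using ex1_u[OF s] .
  show "\<exists>D. (u s has_real_derivative D) (at (c s)) \<and> D \<noteq> 0" using u_deriv[OF s c_pos[OF s]] .
  show "0 < c s" using c_pos[OF s] .
  show "c s < 1" using c_lt1[OF s] .
next
  show "smooth_on {1<..} c" by (rule c_smooth)
next
  fix a b :: real assume "1 < a" "a < b" then show "c b < c a" by (rule c_decr)
next
  show "\<exists>!x::real. 0 < x \<and> x < 1 \<and> x * exp (x + 1) = 1" by (rule c0_ex1)
next
  show "(c \<longlongrightarrow> c0) at_top" by (rule c_lim)
next
  fix s :: nat assume "even s \<and> s \<ge> 2"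
  then show "{z::real. z < 0 \<and> psi s z = 0} = {- real s - c (real s)}"
    using psi_roots by blast
qed

end
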